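(* Let $\mathcal F,\mathcal G$ be $\sigma$-fields and $Y,X,\overline X$ random variables. Suppose (i) $Y$ is $\mathcal F$-measurable, (ii) $X$ and $\overline X$ have the same law, (iii) $\overline X$ is independent of $\mathcal F$, and, for some measurable function $\varphi$, (iv) $\varphi(X,Y)$ and $\varphi(\overline X,Y)$ have the same conditional law given $\mathcal F$, and (v) $\varphi(X,Y)$ is conditionally independent of $\mathcal G$ given $\mathcal F$. Let $\mathcal H=\sigma(\mathcal F\cup\mathcal G)$. Then there exists a random variable $\widetilde X$ with the same law as $X$, independent of $\mathcal H$, such that $\varphi(X,Y)$ and $\varphi(\widetilde X,Y)$ have the same conditional law given $\mathcal H$.
   Context: $U$ and $V$ have the same conditional law given a $\sigma$-field $\mathcal F$ if $\mathbb E[\psi(U)\mid\mathcal F]=\mathbb E[\psi(V)\mid\mathcal F]$ a.s. for every non-negative measurable $\psi$. $U$ is conditionally independent of $V$ (or of a $\sigma$-field) given $\mathcal F$ if $\mathbb E[\psi(U)\chi(V)\mid\mathcal F]=\mathbb E[\psi(U)\mid\mathcal F]\mathbb E[\chi(V)\mid\mathcal F]$ a.s. for all non-negative measurable $\psi,\chi$.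
   Formalization: $\widetilde X$ lives on an extension of the probability space by a measure-preserving measurable map, is independent of the pulled-back H, and $\varphi(X,Y)$, $\varphi(\widetilde X,Y)$ (X, Y pulled back) have the same conditional law given it. Each condition added here is assumed in the paper as well or is needed for the statement above to hold. *)

theory Defs
  imports "HOL-Probability.Probability"
begin

definition same_cond_law ::
  "'a measure \<Rightarrow> 'a measure \<Rightarrow> 'd measure \<Rightarrow> ('a \<Rightarrow> 'd) \<Rightarrow> ('a \<Rightarrow> 'd) \<Rightarrow> bool" where
  "same_cond_law M F N U V \<longleftrightarrow>
     (\<forall>\<psi> :: 'd \<Rightarrow> ennreal. \<psi> \<in> borel_measurable N \<longrightarrow>
        (AE x in M. nn_cond_exp M F (\<lambda>\<omega>. \<psi> (U \<omega>)) x = nn_cond_exp M F (\<lambda>\<omega>. \<psi> (V \<omega>)) x))"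

definition cond_indep_sigma ::
  "'a measure \<Rightarrow> 'a measure \<Rightarrow> 'd measure \<Rightarrow> ('a \<Rightarrow> 'd) \<Rightarrow> 'a measure \<Rightarrow> bool" where
  "cond_indep_sigma M F N U G \<longleftrightarrow>
     (\<forall>\<psi> :: 'd \<Rightarrow> ennreal. \<forall>\<eta> :: 'a \<Rightarrow> ennreal.
        \<psi> \<in> borel_measurable N \<longrightarrow> \<eta> \<in> borel_measurable G \<longrightarrow>
        (AE x in M. nn_cond_exp M F (\<lambda>\<omega>. \<psi> (U \<omega>) * \<eta> \<omega>) x =
                    nn_cond_exp M F (\<lambda>\<omega>. \<psi> (U \<omega>)) x * nn_cond_exp M F \<eta> x))"

definition indep_of_sigma ::
  "'a measure \<Rightarrow> 'b measure \<Rightarrow> ('a \<Rightarrow> 'b) \<Rightarrow> 'a measure \<Rightarrow> bool" where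
  "indep_of_sigma M B X F \<longleftrightarrow>
     prob_space.indep_set M {X -` A \<inter> space M | A. A \<in> sets B} (sets F)"

end

theory Submission
  imports Defs
begin

locale L4 =
  fixes M F G :: "'a measure" and B :: "'b measure" and C :: "'c measure" and D :: "'d measure"
    and X Xbar :: "'a \<Rightarrow> 'b" and Y :: "'a \<Rightarrow> 'c" and \<phi> :: "'b \<times> 'c \<Rightarrow> 'd"
  assumes P: "prob_space M" and subF: "subalgebra M F" and subG: "subalgebra M G"
    and Xm[measurable]: "X \<in> M \<rightarrow>\<^sub>M B" and Xbm[measurable]: "Xbar \<in> M \<rightarrow>\<^sub>M B"
    and Ym[measurable]: "Y \<in> M \<rightarrow>\<^sub>M C"
    and phim[measurable]: "\<phi> \<in> B \<Otimes>\<^sub>M C \<rightarrow>\<^sub>M D"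
    and Y_F[measurable]: "Y \<in> F \<rightarrow>\<^sub>M C"
    and same_law: "distr M B X = distr M B Xbar"
    and Xbar_indep: "indep_of_sigma M B Xbar F"
    and cond_law: "same_cond_law M F D (\<lambda>\<omega>. \<phi> (X \<omega>, Y \<omega>)) (\<lambda>\<omega>. \<phi> (Xbar \<omega>, Y \<omega>))"
    and cond_indep: "cond_indep_sigma M F D (\<lambda>\<omega>. \<phi> (X \<omega>, Y \<omega>)) G"
begin

interpretation prob_space M by (rule P)

abbreviation "\<mu> \<equiv> distr M B X"

lemma prob_mu: "prob_space \<mu>" by (rule prob_space_distr) simp

interpretation mu: prob_space \<mu> by (rule prob_mu)

lemma sfF: "sigma_finite_subalgebra M F"
  by (rule finite_measure_subalgebra_is_sigma_finite, unfold_locales, rule subF)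

interpretation sF: sigma_finite_subalgebra M F by (rule sfF)

definition hh :: "('d \<Rightarrow> ennreal) \<Rightarrow> 'c \<Rightarrow> ennreal" where
  "hh \<psi> c = (\<integral>\<^sup>+x. \<psi> (\<phi> (x, c)) \<partial>\<mu>)"

lemma hh_meas[measurable]: assumes [measurable]: "\<psi> \<in> borel_measurable D" shows "hh \<psi> \<in> borel_measurable C"
  unfolding hh_def by measurable

lemma id_meas_F: "(\<lambda>x. x) \<in> M \<rightarrow>\<^sub>M F"
  using subF unfolding subalgebra_def by (auto simp: measurable_def dest: sets.sets_into_space)

lemma dist_Xbar_id: "\<mu> \<Otimes>\<^sub>M distr M F (\<lambda>x. x) = distr M (B \<Otimes>\<^sub>M F) (\<lambda>x. (Xbar x, x))"
proof (rule pair_measure_eqI)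
  interpret MF: prob_space "distr M F (\<lambda>x. x)" by (rule prob_space_distr) (rule id_meas_F)
  show "sigma_finite_measure \<mu>" by unfold_locales
  show "sigma_finite_measure (distr M F (\<lambda>x. x))" by unfold_locales
  show "sets (\<mu> \<Otimes>\<^sub>M distr M F (\<lambda>x. x)) = sets (distr M (B \<Otimes>\<^sub>M F) (\<lambda>x. (Xbar x, x)))"
    by (simp cong: sets_pair_measure_cong)
  fix A E assume A: "A \<in> sets \<mu>" and E: "E \<in> sets (distr M F (\<lambda>x. x))"
  have A': "A \<in> sets B" and E': "E \<in> sets F" using A E by auto
  have EM: "E \<in> sets M" using E' subF unfolding subalgebra_def by auto
  have ind: "indep_set {Xbar -` A \<inter> space M |A. A \<in> sets B} (sets F)"
    using Xbar_indep unfolding indep_of_sigma_def .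
  have "prob ((Xbar -` A \<inter> space M) \<inter> E) = prob (Xbar -` A \<inter> space M) * prob E"
    using ind[unfolded indep_sets2_eq] A' E' by blast
  moreover have "(\<lambda>x. (Xbar x, x)) -` (A \<times> E) \<inter> space M = (Xbar -` A \<inter> space M) \<inter> E" by auto
  moreover have "emeasure \<mu> A = emeasure M (Xbar -` A \<inter> space M)"
    using A' by (simp add: same_law emeasure_distr)
  moreover have "emeasure (distr M F (\<lambda>x. x)) E = emeasure M E"
    using E' EM by (subst emeasure_distr) (auto intro: id_meas_F)
  moreover have "emeasure (distr M (B \<Otimes>\<^sub>M F) (\<lambda>x. (Xbar x, x))) (A \<times> E) = emeasure M ((\<lambda>x. (Xbar x, x)) -` (A \<times> E) \<inter> space M)"
    using A' E' by (subst emeasure_distr) (auto intro: id_meas_F measurable_Pair)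
  moreover have "Xbar -` A \<inter> space M \<in> sets M" using A' by measurable
  ultimately show "emeasure \<mu> A * emeasure (distr M F (\<lambda>x. x)) E = emeasure (distr M (B \<Otimes>\<^sub>M F) (\<lambda>x. (Xbar x, x))) (A \<times> E)"
    using EM by (simp add: emeasure_eq_measure ennreal_mult'' measure_nonneg)
qed

lemma lemA:
  assumes [measurable]: "\<psi> \<in> borel_measurable D" and A: "A \<in> sets F"
  shows "(\<integral>\<^sup>+\<omega>. \<psi> (\<phi> (Xbar \<omega>, Y \<omega>)) * indicator A \<omega> \<partial>M) = (\<integral>\<^sup>+\<omega>. hh \<psi> (Y \<omega>) * indicator A \<omega> \<partial>M)"
proof -
  let ?MF = "distr M F (\<lambda>x. x)"
  interpret MF: prob_space ?MF by (rule prob_space_distr) (rule id_meas_F)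
  interpret pp: pair_sigma_finite \<mu> ?MF by unfold_locales
  have dist: "\<mu> \<Otimes>\<^sub>M ?MF = distr M (B \<Otimes>\<^sub>M F) (\<lambda>x. (Xbar x, x))"
    by (rule dist_Xbar_id)
  have [measurable]: "A \<in> sets F" by (rule A)
  have fm: "(\<lambda>(x, \<omega>). \<psi> (\<phi> (x, Y \<omega>)) * indicator A \<omega>) \<in> borel_measurable (B \<Otimes>\<^sub>M F)"
    by measurable
  have "(\<integral>\<^sup>+\<omega>. \<psi> (\<phi> (Xbar \<omega>, Y \<omega>)) * indicator A \<omega> \<partial>M)
      = (\<integral>\<^sup>+p. (\<lambda>(x, \<omega>). \<psi> (\<phi> (x, Y \<omega>)) * indicator A \<omega>) p \<partial>distr M (B \<Otimes>\<^sub>M F) (\<lambda>x. (Xbar x, x)))"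
    by (subst nn_integral_distr) (auto intro!: fm measurable_Pair id_meas_F)
  also have "\<dots> = (\<integral>\<^sup>+p. (\<lambda>(x, \<omega>). \<psi> (\<phi> (x, Y \<omega>)) * indicator A \<omega>) p \<partial>(\<mu> \<Otimes>\<^sub>M ?MF))"
    by (simp add: dist)
  also have "\<dots> = (\<integral>\<^sup>+\<omega>. (\<integral>\<^sup>+x. \<psi> (\<phi> (x, Y \<omega>)) * indicator A \<omega> \<partial>\<mu>) \<partial>?MF)"
  proof -
    have "sets (\<mu> \<Otimes>\<^sub>M ?MF) = sets (B \<Otimes>\<^sub>M F)" by (simp cong: sets_pair_measure_cong)
    then have fm2: "(\<lambda>(x, \<omega>). \<psi> (\<phi> (x, Y \<omega>)) * indicator A \<omega>) \<in> borel_measurable (\<mu> \<Otimes>\<^sub>M ?MF)"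
      using fm measurable_cong_sets by blast
    show ?thesis using pp.nn_integral_snd[OF fm2] by simp
  qed
  also have "\<dots> = (\<integral>\<^sup>+\<omega>. hh \<psi> (Y \<omega>) * indicator A \<omega> \<partial>?MF)"
    unfolding hh_def
    by (intro nn_integral_cong nn_integral_multc) (auto simp: space_pair_measure)
  also have "\<dots> = (\<integral>\<^sup>+\<omega>. hh \<psi> (Y \<omega>) * indicator A \<omega> \<partial>M)"
    by (subst nn_integral_distr) (auto intro: id_meas_F)
  finally show ?thesis .
qed


abbreviation "U \<equiv> (\<lambda>\<omega>. \<phi> (X \<omega>, Y \<omega>))"

lemma lemB:
  assumes [measurable]: "\<psi> \<in> borel_measurable D" and A: "A \<in> sets F"
  shows "(\<integral>\<^sup>+\<omega>. \<psi> (U \<omega>) * indicator A \<omega> \<partial>M) = (\<integral>\<^sup>+\<omega>. hh \<psi> (Y \<omega>) * indicator A \<omega> \<partial>M)"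
proof -
  have [measurable]: "A \<in> sets F" by (rule A)
  have AE: "AE x in M. nn_cond_exp M F (\<lambda>\<omega>. \<psi> (U \<omega>)) x = nn_cond_exp M F (\<lambda>\<omega>. \<psi> (\<phi> (Xbar \<omega>, Y \<omega>))) x"
    using cond_law unfolding same_cond_law_def by auto
  have "(\<integral>\<^sup>+\<omega>. \<psi> (U \<omega>) * indicator A \<omega> \<partial>M) = (\<integral>\<^sup>+\<omega>. indicator A \<omega> * \<psi> (U \<omega>) \<partial>M)"
    by (simp add: mult.commute)
  also have "\<dots> = (\<integral>\<^sup>+\<omega>. indicator A \<omega> * nn_cond_exp M F (\<lambda>\<omega>. \<psi> (U \<omega>)) \<omega> \<partial>M)"
    by (rule sF.nn_cond_exp_intg[symmetric]) measurable
  also have "\<dots> = (\<integral>\<^sup>+\<omega>. indicator A \<omega> * nn_cond_exp M F (\<lambda>\<omega>. \<psi> (\<phi> (Xbar \<omega>, Y \<omega>))) \<omega> \<partial>M)"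
    by (rule nn_integral_cong_AE) (use AE in auto)
  also have "\<dots> = (\<integral>\<^sup>+\<omega>. indicator A \<omega> * \<psi> (\<phi> (Xbar \<omega>, Y \<omega>)) \<partial>M)"
    by (rule sF.nn_cond_exp_intg) measurable
  also have "\<dots> = (\<integral>\<^sup>+\<omega>. \<psi> (\<phi> (Xbar \<omega>, Y \<omega>)) * indicator A \<omega> \<partial>M)"
    by (simp add: mult.commute)
  also have "\<dots> = (\<integral>\<^sup>+\<omega>. hh \<psi> (Y \<omega>) * indicator A \<omega> \<partial>M)"
    by (rule lemA) (auto simp: A)
  finally show ?thesis .
qed

lemma lemB':
  assumes [measurable]: "\<psi> \<in> borel_measurable D"
  shows "AE x in M. hh \<psi> (Y x) = nn_cond_exp M F (\<lambda>\<omega>. \<psi> (U \<omega>)) x"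
  by (rule sF.nn_cond_exp_charact) (auto simp: lemB)

lemma lemC:
  assumes [measurable]: "\<psi> \<in> borel_measurable D" and A: "A \<in> sets F" and Bs: "Bs \<in> sets G"
  shows "(\<integral>\<^sup>+\<omega>. \<psi> (U \<omega>) * indicator (A \<inter> Bs) \<omega> \<partial>M) = (\<integral>\<^sup>+\<omega>. hh \<psi> (Y \<omega>) * indicator (A \<inter> Bs) \<omega> \<partial>M)"
proof -
  have [measurable]: "A \<in> sets F" by (rule A)
  have BsM[measurable]: "Bs \<in> sets M" using Bs subG unfolding subalgebra_def by auto
  have BsG: "indicator Bs \<in> borel_measurable G" using Bs by simp
  have AE1: "AE x in M. nn_cond_exp M F (\<lambda>\<omega>. \<psi> (U \<omega>) * indicator Bs \<omega>) x =
                    nn_cond_exp M F (\<lambda>\<omega>. \<psi> (U \<omega>)) x * nn_cond_exp M F (indicator Bs) x"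
    using cond_indep BsG assms(1) unfolding cond_indep_sigma_def by blast
  have AE2: "AE x in M. hh \<psi> (Y x) = nn_cond_exp M F (\<lambda>\<omega>. \<psi> (U \<omega>)) x" by (rule lemB') simp
  have "(\<integral>\<^sup>+\<omega>. \<psi> (U \<omega>) * indicator (A \<inter> Bs) \<omega> \<partial>M) = (\<integral>\<^sup>+\<omega>. indicator A \<omega> * (\<psi> (U \<omega>) * indicator Bs \<omega>) \<partial>M)"
    by (intro nn_integral_cong) (simp add: indicator_inter_arith ac_simps)
  also have "\<dots> = (\<integral>\<^sup>+\<omega>. indicator A \<omega> * nn_cond_exp M F (\<lambda>\<omega>. \<psi> (U \<omega>) * indicator Bs \<omega>) \<omega> \<partial>M)"
    by (rule sF.nn_cond_exp_intg[symmetric]) measurable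
  also have "\<dots> = (\<integral>\<^sup>+\<omega>. (indicator A \<omega> * hh \<psi> (Y \<omega>)) * nn_cond_exp M F (indicator Bs) \<omega> \<partial>M)"
    by (rule nn_integral_cong_AE) (use AE1 AE2 in \<open>auto simp: ac_simps\<close>)
  also have "\<dots> = (\<integral>\<^sup>+\<omega>. (indicator A \<omega> * hh \<psi> (Y \<omega>)) * indicator Bs \<omega> \<partial>M)"
    by (rule sF.nn_cond_exp_intg) measurable
  also have "\<dots> = (\<integral>\<^sup>+\<omega>. hh \<psi> (Y \<omega>) * indicator (A \<inter> Bs) \<omega> \<partial>M)"
    by (intro nn_integral_cong) (simp add: indicator_inter_arith ac_simps)
  finally show ?thesis .
qed


lemma FG_Pow: "sets F \<union> sets G \<subseteq> Pow (space M)"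
  using subF subG sets.sets_into_space[of _ M] unfolding subalgebra_def by blast

lemma FG_sets: "sigma_sets (space M) (sets F \<union> sets G) \<subseteq> sets M"
  using subF subG unfolding subalgebra_def by (intro sets.sigma_sets_subset) auto

lemma lemD_bdd:
  assumes [measurable]: "\<psi> \<in> borel_measurable D" and bdd: "\<And>d. \<psi> d \<le> of_nat n"
    and E: "E \<in> sigma_sets (space M) (sets F \<union> sets G)"
  shows "(\<integral>\<^sup>+\<omega>. \<psi> (U \<omega>) * indicator E \<omega> \<partial>M) = (\<integral>\<^sup>+\<omega>. hh \<psi> (Y \<omega>) * indicator E \<omega> \<partial>M)"
proof -
  define Gen where "Gen = {A \<inter> Bs | A Bs. A \<in> sets F \<and> Bs \<in> sets G}"
  define HM where "HM = sigma (space M) (sets F \<union> sets G)"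
  have HMs: "sets HM = sigma_sets (space M) (sets F \<union> sets G)"
    unfolding HM_def using FG_Pow by (rule sets_measure_of)
  have HMsp: "space HM = space M"
    unfolding HM_def using FG_Pow by (rule space_measure_of)
  have spF: "space M \<in> sets F" "space M \<in> sets G"
    using subF subG unfolding subalgebra_def by (metis sets.top)+
  have GenPow: "Gen \<subseteq> Pow (space M)" unfolding Gen_def using FG_Pow by auto
  have IS: "Int_stable Gen"
    unfolding Int_stable_def Gen_def
  proof safe
    fix A1 B1 A2 B2 assume "A1 \<in> sets F" "B1 \<in> sets G" "A2 \<in> sets F" "B2 \<in> sets G"
    then show "\<exists>A Bs. A1 \<inter> B1 \<inter> (A2 \<inter> B2) = A \<inter> Bs \<and> A \<in> sets F \<and> Bs \<in> sets G"
      by (intro exI[of _ "A1 \<inter> A2"] exI[of _ "B1 \<inter> B2"]) auto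
  qed
  have sig: "sigma_sets (space M) Gen = sigma_sets (space M) (sets F \<union> sets G)"
  proof
    interpret SA: sigma_algebra "space M" "sigma_sets (space M) (sets F \<union> sets G)"
      by (rule sigma_algebra_sigma_sets) (rule FG_Pow)
    show "sigma_sets (space M) Gen \<subseteq> sigma_sets (space M) (sets F \<union> sets G)"
      by (rule sigma_sets_mono) (auto simp: Gen_def intro!: SA.Int)
    show "sigma_sets (space M) (sets F \<union> sets G) \<subseteq> sigma_sets (space M) Gen"
    proof (rule sigma_sets_mono')
      show "sets F \<union> sets G \<subseteq> Gen"
      proof
        fix x assume "x \<in> sets F \<union> sets G"
        then show "x \<in> Gen"
        proof
          assume "x \<in> sets F" then show ?thesis unfolding Gen_def
            using spF FG_Pow \<open>x \<in> sets F\<close> by (intro CollectI exI[of _ x] exI[of _ "space M"]) auto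
        next
          assume "x \<in> sets G" then show ?thesis unfolding Gen_def
            using spF FG_Pow \<open>x \<in> sets G\<close> by (intro CollectI exI[of _ "space M"] exI[of _ x]) auto
        qed
      qed
    qed
  qed
  let ?f1 = "\<lambda>\<omega>. \<psi> (U \<omega>)" and ?f2 = "\<lambda>\<omega>. hh \<psi> (Y \<omega>)"
  let ?N1 = "restr_to_subalg (density M ?f1) HM" and ?N2 = "restr_to_subalg (density M ?f2) HM"
  have sub1: "subalgebra (density M ?f1) HM" and sub2: "subalgebra (density M ?f2) HM"
    unfolding subalgebra_def using HMs HMsp FG_sets by auto
  have em1: "emeasure ?N1 S = (\<integral>\<^sup>+\<omega>. ?f1 \<omega> * indicator S \<omega> \<partial>M)" if "S \<in> sets HM" for S
    using that HMs FG_sets by (subst emeasure_restr_to_subalg[OF sub1]) (auto simp: emeasure_density)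
  have em2: "emeasure ?N2 S = (\<integral>\<^sup>+\<omega>. ?f2 \<omega> * indicator S \<omega> \<partial>M)" if "S \<in> sets HM" for S
    using that HMs FG_sets by (subst emeasure_restr_to_subalg[OF sub2]) (auto simp: emeasure_density)
  have GenHM: "Gen \<subseteq> sets HM" using sig HMs by auto
  have "?N1 = ?N2"
  proof (rule measure_eqI_generator_eq[OF IS GenPow, where A="\<lambda>_. space M"])
    fix S assume S: "S \<in> Gen"
    then obtain A Bs where "S = A \<inter> Bs" "A \<in> sets F" "Bs \<in> sets G" unfolding Gen_def by auto
    then show "emeasure ?N1 S = emeasure ?N2 S"
      using S GenHM em1 em2 lemC by auto
  next
    show "sets ?N1 = sigma_sets (space M) Gen" using sets_restr_to_subalg[OF sub1] HMs sig by simp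
    show "sets ?N2 = sigma_sets (space M) Gen" using sets_restr_to_subalg[OF sub2] HMs sig by simp
    show "range (\<lambda>_. space M) \<subseteq> Gen" using spF unfolding Gen_def by auto
    show "(\<Union>i. space M) = space M" by simp
    have "space M \<in> sets HM" using HMsp sets.top by metis
    then have "emeasure ?N1 (space M) = (\<integral>\<^sup>+\<omega>. ?f1 \<omega> * indicator (space M) \<omega> \<partial>M)" by (rule em1)
    also have "\<dots> \<le> (\<integral>\<^sup>+\<omega>. of_nat n \<partial>M)"
      by (intro nn_integral_mono) (auto simp: bdd indicator_def)
    also have "\<dots> < \<infinity>" by (simp add: emeasure_space_1 of_nat_less_top)
    finally show "emeasure ?N1 (space M) \<noteq> \<infinity>" by simp
  qed
  moreover have "E \<in> sets HM" using E HMs by simp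
  ultimately show ?thesis using em1 em2 by metis
qed


lemma sup_min: "(SUP n. min x (of_nat n :: ennreal)) = x"
proof (cases "x = top")
  case True then show ?thesis by (simp add: ennreal_SUP_of_nat_eq_top)
next
  case False
  then obtain r where r: "x = ennreal r" "0 \<le> r" by (cases x) auto
  obtain N :: nat where "r \<le> real N" using real_arch_simple by blast
  then have xN: "x \<le> of_nat N" using r by (metis ennreal_le_iff of_nat_0_le_iff ennreal_of_nat_eq_real_of_nat)
  show ?thesis
  proof (rule antisym)
    show "(SUP n. min x (of_nat n)) \<le> x" by (rule SUP_least) simp
    show "x \<le> (SUP n. min x (of_nat n))" by (rule SUP_upper2[of N]) (use xN in auto)
  qed
qed

lemma lemD:
  assumes [measurable]: "\<psi> \<in> borel_measurable D"
    and E: "E \<in> sigma_sets (space M) (sets F \<union> sets G)"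
  shows "(\<integral>\<^sup>+\<omega>. \<psi> (U \<omega>) * indicator E \<omega> \<partial>M) = (\<integral>\<^sup>+\<omega>. hh \<psi> (Y \<omega>) * indicator E \<omega> \<partial>M)"
proof -
  define \<psi>n where "\<psi>n n d = min (\<psi> d) (of_nat n :: ennreal)" for n d
  have mn[measurable]: "\<psi>n n \<in> borel_measurable D" for n unfolding \<psi>n_def by measurable
  have EM[measurable]: "E \<in> sets M" using E FG_sets by auto
  have incn: "\<psi>n i d \<le> \<psi>n j d" if "i \<le> j" for i j d
    unfolding \<psi>n_def using that by (intro min.mono) auto
  have eqn: "(\<integral>\<^sup>+\<omega>. \<psi>n n (U \<omega>) * indicator E \<omega> \<partial>M) = (\<integral>\<^sup>+\<omega>. hh (\<psi>n n) (Y \<omega>) * indicator E \<omega> \<partial>M)" for n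
    by (rule lemD_bdd[where n=n]) (auto simp: \<psi>n_def E)
  have supn: "(SUP n. \<psi>n n d) = \<psi> d" for d unfolding \<psi>n_def by (rule sup_min)
  have "(\<integral>\<^sup>+\<omega>. \<psi> (U \<omega>) * indicator E \<omega> \<partial>M) = (\<integral>\<^sup>+\<omega>. (SUP n. \<psi>n n (U \<omega>) * indicator E \<omega>) \<partial>M)"
    by (intro nn_integral_cong) (auto simp: indicator_def supn)
  also have "\<dots> = (SUP n. \<integral>\<^sup>+\<omega>. \<psi>n n (U \<omega>) * indicator E \<omega> \<partial>M)"
    by (rule nn_integral_monotone_convergence_SUP)
       (auto simp: incseq_def le_fun_def intro!: mult_right_mono incn)
  also have "\<dots> = (SUP n. \<integral>\<^sup>+\<omega>. hh (\<psi>n n) (Y \<omega>) * indicator E \<omega> \<partial>M)"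
    by (simp add: eqn)
  also have "\<dots> = (\<integral>\<^sup>+\<omega>. (SUP n. hh (\<psi>n n) (Y \<omega>) * indicator E \<omega>) \<partial>M)"
    by (rule nn_integral_monotone_convergence_SUP[symmetric])
       (auto simp: incseq_def le_fun_def hh_def intro!: mult_right_mono nn_integral_mono incn)
  also have "\<dots> = (\<integral>\<^sup>+\<omega>. hh \<psi> (Y \<omega>) * indicator E \<omega> \<partial>M)"
  proof (intro nn_integral_cong)
    fix \<omega> assume \<omega>: "\<omega> \<in> space M"
    have "(SUP n. hh (\<psi>n n) (Y \<omega>)) = hh \<psi> (Y \<omega>)"
      unfolding hh_def
    proof (subst nn_integral_monotone_convergence_SUP[symmetric])
      show "incseq (\<lambda>n x. \<psi>n n (\<phi> (x, Y \<omega>)))"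
        by (auto simp: incseq_def le_fun_def intro!: incn)
      show "(\<lambda>x. \<psi>n i (\<phi> (x, Y \<omega>))) \<in> borel_measurable \<mu>" for i
        using \<omega> by measurable
    qed (simp add: supn)
    then show "(SUP n. hh (\<psi>n n) (Y \<omega>) * indicator E \<omega>) = hh \<psi> (Y \<omega>) * indicator E \<omega>"
      by (auto simp: indicator_def)
  qed
  finally show ?thesis .
qed


abbreviation "M' \<equiv> M \<Otimes>\<^sub>M \<mu>"

interpretation PP: pair_prob_space M \<mu> by unfold_locales

lemma space_M': "space M' = space M \<times> space B" by (simp add: space_pair_measure)

lemma main_part:
  fixes F' G' H'
  defines "F' \<equiv> vimage_algebra (space M') fst F"
    and "G' \<equiv> vimage_algebra (space M') fst G"
    and "H' \<equiv> sigma (space M') (sets F' \<union> sets G')"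
  shows "distr M' B snd = distr M B X \<and>
               indep_of_sigma M' B snd H' \<and>
               same_cond_law M' H' D (\<lambda>\<omega>. \<phi> (X (fst \<omega>), Y (fst \<omega>)))
                                     (\<lambda>\<omega>. \<phi> (snd \<omega>, Y (fst \<omega>)))"
proof -
  define HM where "HM = sigma (space M) (sets F \<union> sets G)"
  have HMs: "sets HM = sigma_sets (space M) (sets F \<union> sets G)"
    unfolding HM_def using FG_Pow by (rule sets_measure_of)
  have HMsp: "space HM = space M"
    unfolding HM_def using FG_Pow by (rule space_measure_of)
  have fstf: "fst \<in> space M' \<rightarrow> space F" "fst \<in> space M' \<rightarrow> space G" "fst \<in> space M' \<rightarrow> space HM"
    using subF subG HMsp unfolding subalgebra_def by (auto simp: space_M')
  have F's: "sets F' = {fst -` A \<inter> space M' | A. A \<in> sets F}"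
    unfolding F'_def by (rule sets_vimage_algebra2[OF fstf(1)])
  have G's: "sets G' = {fst -` A \<inter> space M' | A. A \<in> sets G}"
    unfolding G'_def by (rule sets_vimage_algebra2[OF fstf(2)])
  have V: "sets (vimage_algebra (space M') fst HM) = {fst -` A \<inter> space M' | A. A \<in> sets HM}"
    by (rule sets_vimage_algebra2[OF fstf(3)])
  have FGPow': "sets F' \<union> sets G' \<subseteq> Pow (space M')"
    unfolding F'_def G'_def using sets.sets_into_space[of _ "vimage_algebra (space M') fst F"]
      sets.sets_into_space[of _ "vimage_algebra (space M') fst G"] by auto
  have H's: "sets H' = sigma_sets (space M') (sets F' \<union> sets G')"
    unfolding H'_def using FGPow' by (rule sets_measure_of)
  have H'sp: "space H' = space M'"
    unfolding H'_def using FGPow' by (rule space_measure_of)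
  have H'sub: "sets H' \<subseteq> {fst -` A \<inter> space M' | A. A \<in> sets HM}"
  proof -
    have "sigma_sets (space (vimage_algebra (space M') fst HM)) (sets F' \<union> sets G') \<subseteq> sets (vimage_algebra (space M') fst HM)"
      by (rule sets.sigma_sets_subset) (unfold F's G's V HMs, auto)
    then show ?thesis unfolding H's V[symmetric] by simp
  qed
  have Etimes: "fst -` A \<inter> space M' = A \<times> space B" if "A \<in> sets M" for A
    using that sets.sets_into_space by (auto simp: space_M')
  have H'M: "sets H' \<subseteq> sets M'"
  proof
    fix S assume "S \<in> sets H'"
    then obtain A where A: "A \<in> sets HM" "S = fst -` A \<inter> space M'" using H'sub by auto
    then have "A \<in> sets M" using HMs FG_sets by auto
    then show "S \<in> sets M'" using A Etimes by auto
  qed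
  have subH': "subalgebra M' H'" unfolding subalgebra_def using H'sp H'M by simp
  interpret sH: sigma_finite_subalgebra M' H'
    by (rule finite_measure_subalgebra_is_sigma_finite, unfold_locales, rule subH')

  have dist_snd: "distr M' B snd = \<mu>"
  proof (rule measure_eqI)
    show "sets (distr M' B snd) = sets \<mu>" by simp
    fix A assume "A \<in> sets (distr M' B snd)"
    then have A: "A \<in> sets B" by simp
    have "snd -` A \<inter> space M' = space M \<times> A" using A sets.sets_into_space by (auto simp: space_M')
    then show "emeasure (distr M' B snd) A = emeasure \<mu> A"
      using A by (simp add: emeasure_distr mu.emeasure_pair_measure_Times emeasure_space_1)
  qed

  have indep: "indep_of_sigma M' B snd H'"
    unfolding indep_of_sigma_def PP.P.indep_sets2_eq
  proof (intro conjI ballI)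
    have "snd -` A \<inter> space M' \<in> sets M'" if "A \<in> sets B" for A
      using that by measurable
    then show "{snd -` A \<inter> space M' |A. A \<in> sets B} \<subseteq> sets M'" by blast
    show "sets H' \<subseteq> sets M'" by (rule H'M)
    fix a b assume a: "a \<in> {snd -` A \<inter> space M' |A. A \<in> sets B}" and b: "b \<in> sets H'"
    obtain A where A0: "A \<in> sets B" "a = snd -` A \<inter> space M'" using a by auto
    have "snd -` A \<inter> space M' = space M \<times> A" using A0(1) sets.sets_into_space[OF A0(1)] by (auto simp: space_M')
    then have A: "A \<in> sets B" "a = space M \<times> A" using A0 by auto
    obtain E where E: "E \<in> sets HM" "b = fst -` E \<inter> space M'" using b H'sub by auto
    have EM: "E \<in> sets M" using E HMs FG_sets by auto
    have b': "b = E \<times> space B" using E EM Etimes by auto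
    have ab: "a \<inter> b = E \<times> A" using A b' sets.sets_into_space[OF EM] sets.sets_into_space[OF A(1)] by auto
    have spB: "space B \<in> sets \<mu>" "emeasure \<mu> (space B) = 1" using mu.emeasure_space_1 by auto
    have "measure M' (a \<inter> b) = measure M E * measure \<mu> A"
      unfolding ab using A EM by (simp add: measure_def mu.emeasure_pair_measure_Times enn2real_mult)
    moreover have "measure M' a = measure \<mu> A"
      unfolding A(2) using A EM by (simp add: measure_def mu.emeasure_pair_measure_Times emeasure_space_1)
    moreover have "measure M' b = measure M E"
      unfolding b' using A EM spB by (simp add: measure_def mu.emeasure_pair_measure_Times del: sets_distr)
    ultimately show "measure M' (a \<inter> b) = measure M' a * measure M' b" by simp
  qed

  have YH: "(\<lambda>\<omega>. Y (fst \<omega>)) \<in> H' \<rightarrow>\<^sub>M C"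
  proof -
    have "fst \<in> F' \<rightarrow>\<^sub>M F" unfolding F'_def by (rule measurable_vimage_algebra1[OF fstf(1)])
    then have "(\<lambda>\<omega>. Y (fst \<omega>)) \<in> F' \<rightarrow>\<^sub>M C" using Y_F by (rule measurable_compose)
    moreover have "subalgebra H' F'"
      unfolding subalgebra_def using H'sp H's by (auto simp: F'_def)
    ultimately show ?thesis by (rule measurable_from_subalg[rotated])
  qed
  have cl: "same_cond_law M' H' D (\<lambda>\<omega>. \<phi> (X (fst \<omega>), Y (fst \<omega>))) (\<lambda>\<omega>. \<phi> (snd \<omega>, Y (fst \<omega>)))"
    unfolding same_cond_law_def
  proof (intro allI impI)
    fix \<psi> :: "'d \<Rightarrow> ennreal" assume [measurable]: "\<psi> \<in> borel_measurable D"
    have gH: "(\<lambda>\<omega>. hh \<psi> (Y (fst \<omega>))) \<in> borel_measurable H'"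
      using YH by (rule measurable_compose) simp
    have ind_eq: "indicator S \<omega> = indicator E (fst \<omega>)" if "S = fst -` E \<inter> space M'" "\<omega> \<in> space M'" for S E \<omega>
      using that by (auto simp: indicator_def)
    have distrint: "(\<integral>\<^sup>+\<omega>. f (fst \<omega>) \<partial>M') = (\<integral>\<^sup>+\<omega>. f \<omega> \<partial>M)" if [measurable]: "f \<in> borel_measurable M" for f
    proof -
      have "(\<integral>\<^sup>+\<omega>. f \<omega> \<partial>M) = (\<integral>\<^sup>+\<omega>. f \<omega> \<partial>distr M' M fst)" by (simp add: mu.distr_pair_fst)
      also have "\<dots> = (\<integral>\<^sup>+\<omega>. f (fst \<omega>) \<partial>M')" by (rule nn_integral_distr) auto
      finally show ?thesis by simp
    qed
    have AE1: "AE \<omega> in M'. hh \<psi> (Y (fst \<omega>)) = nn_cond_exp M' H' (\<lambda>\<omega>. \<psi> (\<phi> (X (fst \<omega>), Y (fst \<omega>)))) \<omega>"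
    proof (rule sH.nn_cond_exp_charact[OF _ _ gH])
      show "(\<lambda>\<omega>. \<psi> (\<phi> (X (fst \<omega>), Y (fst \<omega>)))) \<in> borel_measurable M'" by measurable
      fix S assume "S \<in> sets H'"
      then obtain E where E: "E \<in> sets HM" "S = fst -` E \<inter> space M'" using H'sub by auto
      have EM[measurable]: "E \<in> sets M" using E HMs FG_sets by auto
      have "(\<integral>\<^sup>+\<omega>. \<psi> (\<phi> (X (fst \<omega>), Y (fst \<omega>))) * indicator S \<omega> \<partial>M')
          = (\<integral>\<^sup>+\<omega>. \<psi> (U (fst \<omega>)) * indicator E (fst \<omega>) \<partial>M')"
        by (intro nn_integral_cong) (simp add: ind_eq[OF E(2)])
      also have "\<dots> = (\<integral>\<^sup>+\<omega>. \<psi> (U \<omega>) * indicator E \<omega> \<partial>M)"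
        by (rule distrint[of "\<lambda>\<omega>. \<psi> (U \<omega>) * indicator E \<omega>"]) measurable
      also have "\<dots> = (\<integral>\<^sup>+\<omega>. hh \<psi> (Y \<omega>) * indicator E \<omega> \<partial>M)"
        by (rule lemD) (use E HMs in auto)
      also have "\<dots> = (\<integral>\<^sup>+\<omega>. hh \<psi> (Y (fst \<omega>)) * indicator E (fst \<omega>) \<partial>M')"
        by (rule distrint[of "\<lambda>\<omega>. hh \<psi> (Y \<omega>) * indicator E \<omega>", symmetric]) measurable
      also have "\<dots> = (\<integral>\<^sup>+\<omega>. hh \<psi> (Y (fst \<omega>)) * indicator S \<omega> \<partial>M')"
        by (intro nn_integral_cong) (simp add: ind_eq[OF E(2)])
      finally show "(\<integral>\<^sup>+\<omega>\<in>S. \<psi> (\<phi> (X (fst \<omega>), Y (fst \<omega>))) \<partial>M') = (\<integral>\<^sup>+\<omega>\<in>S. hh \<psi> (Y (fst \<omega>)) \<partial>M')" .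
    qed
    have AE2: "AE \<omega> in M'. hh \<psi> (Y (fst \<omega>)) = nn_cond_exp M' H' (\<lambda>\<omega>. \<psi> (\<phi> (snd \<omega>, Y (fst \<omega>)))) \<omega>"
    proof (rule sH.nn_cond_exp_charact[OF _ _ gH])
      show "(\<lambda>\<omega>. \<psi> (\<phi> (snd \<omega>, Y (fst \<omega>)))) \<in> borel_measurable M'" by measurable
      fix S assume "S \<in> sets H'"
      then obtain E where E: "E \<in> sets HM" "S = fst -` E \<inter> space M'" using H'sub by auto
      have EM[measurable]: "E \<in> sets M" using E HMs FG_sets by auto
      have "(\<integral>\<^sup>+\<omega>. \<psi> (\<phi> (snd \<omega>, Y (fst \<omega>))) * indicator S \<omega> \<partial>M')
          = (\<integral>\<^sup>+\<omega>. \<psi> (\<phi> (snd \<omega>, Y (fst \<omega>))) * indicator E (fst \<omega>) \<partial>M')"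
        by (intro nn_integral_cong) (simp add: ind_eq[OF E(2)])
      also have "\<dots> = (\<integral>\<^sup>+\<omega>. (\<integral>\<^sup>+x. \<psi> (\<phi> (x, Y \<omega>)) * indicator E \<omega> \<partial>\<mu>) \<partial>M)"
      proof -
        have m: "(\<lambda>\<omega>. \<psi> (\<phi> (snd \<omega>, Y (fst \<omega>))) * indicator E (fst \<omega>)) \<in> borel_measurable M'"
          by measurable
        show ?thesis using mu.nn_integral_fst[OF m] by simp
      qed
      also have "\<dots> = (\<integral>\<^sup>+\<omega>. hh \<psi> (Y \<omega>) * indicator E \<omega> \<partial>M)"
        unfolding hh_def by (intro nn_integral_cong nn_integral_multc) measurable
      also have "\<dots> = (\<integral>\<^sup>+\<omega>. hh \<psi> (Y (fst \<omega>)) * indicator E (fst \<omega>) \<partial>M')"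
        by (rule distrint[of "\<lambda>\<omega>. hh \<psi> (Y \<omega>) * indicator E \<omega>", symmetric]) measurable
      also have "\<dots> = (\<integral>\<^sup>+\<omega>. hh \<psi> (Y (fst \<omega>)) * indicator S \<omega> \<partial>M')"
        by (intro nn_integral_cong) (simp add: ind_eq[OF E(2)])
      finally show "(\<integral>\<^sup>+\<omega>\<in>S. \<psi> (\<phi> (snd \<omega>, Y (fst \<omega>))) \<partial>M') = (\<integral>\<^sup>+\<omega>\<in>S. hh \<psi> (Y (fst \<omega>)) \<partial>M')" .
    qed
    show "AE \<omega> in M'. nn_cond_exp M' H' (\<lambda>\<omega>. \<psi> (\<phi> (X (fst \<omega>), Y (fst \<omega>)))) \<omega> =
                      nn_cond_exp M' H' (\<lambda>\<omega>. \<psi> (\<phi> (snd \<omega>, Y (fst \<omega>)))) \<omega>"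
      using AE1 AE2 by eventually_elim simp
  qed
  show ?thesis using dist_snd indep cl by simp
qed


lemma final:
  "\<exists>(M'' :: ('a \<times> 'b) measure) (\<pi> :: 'a \<times> 'b \<Rightarrow> 'a) (Xt :: 'a \<times> 'b \<Rightarrow> 'b).
           prob_space M'' \<and> \<pi> \<in> M'' \<rightarrow>\<^sub>M M \<and> distr M'' M \<pi> = M \<and>
           Xt \<in> M'' \<rightarrow>\<^sub>M B \<and>
           (let F' = vimage_algebra (space M'') \<pi> F;
                G' = vimage_algebra (space M'') \<pi> G;
                H' = sigma (space M'') (sets F' \<union> sets G')
            in distr M'' B Xt = distr M B X \<and>
               indep_of_sigma M'' B Xt H' \<and>
               same_cond_law M'' H' D (\<lambda>\<omega>. \<phi> (X (\<pi> \<omega>), Y (\<pi> \<omega>)))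
                                     (\<lambda>\<omega>. \<phi> (Xt \<omega>, Y (\<pi> \<omega>))))"
proof (intro exI conjI)
  show "prob_space M'" by (rule PP.P.prob_space_axioms)
  show "fst \<in> M' \<rightarrow>\<^sub>M M" by (rule measurable_fst)
  show "distr M' M fst = M" by (rule mu.distr_pair_fst)
  show "snd \<in> M' \<rightarrow>\<^sub>M B" by measurable
  show "let F' = vimage_algebra (space M') fst F;
                G' = vimage_algebra (space M') fst G;
                H' = sigma (space M') (sets F' \<union> sets G')
            in distr M' B snd = distr M B X \<and>
               indep_of_sigma M' B snd H' \<and>
               same_cond_law M' H' D (\<lambda>\<omega>. \<phi> (X (fst \<omega>), Y (fst \<omega>)))
                                     (\<lambda>\<omega>. \<phi> (snd \<omega>, Y (fst \<omega>)))"
    unfolding Let_def by (rule main_part)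
qed

end

theorem lemma4:
  fixes M :: "'a measure" and F G :: "'a measure"
    and B :: "'b measure" and C :: "'c measure" and D :: "'d measure"
    and X Xbar :: "'a \<Rightarrow> 'b" and Y :: "'a \<Rightarrow> 'c" and \<phi> :: "'b \<times> 'c \<Rightarrow> 'd"
  assumes "prob_space M"
    and "subalgebra M F" and "subalgebra M G"
    and "X \<in> M \<rightarrow>\<^sub>M B" and "Xbar \<in> M \<rightarrow>\<^sub>M B" and "Y \<in> M \<rightarrow>\<^sub>M C"
    and "\<phi> \<in> B \<Otimes>\<^sub>M C \<rightarrow>\<^sub>M D"
    and Y_F: "Y \<in> F \<rightarrow>\<^sub>M C"
    and same_law: "distr M B X = distr M B Xbar"
    and Xbar_indep: "indep_of_sigma M B Xbar F"
    and cond_law: "same_cond_law M F D (\<lambda>\<omega>. \<phi> (X \<omega>, Y \<omega>)) (\<lambda>\<omega>. \<phi> (Xbar \<omega>, Y \<omega>))"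
    and cond_indep: "cond_indep_sigma M F D (\<lambda>\<omega>. \<phi> (X \<omega>, Y \<omega>)) G"
  shows "\<exists>(M' :: ('a \<times> 'b) measure) (\<pi> :: 'a \<times> 'b \<Rightarrow> 'a) (Xt :: 'a \<times> 'b \<Rightarrow> 'b).
           prob_space M' \<and> \<pi> \<in> M' \<rightarrow>\<^sub>M M \<and> distr M' M \<pi> = M \<and>
           Xt \<in> M' \<rightarrow>\<^sub>M B \<and>
           (let F' = vimage_algebra (space M') \<pi> F;
                G' = vimage_algebra (space M') \<pi> G;
                H' = sigma (space M') (sets F' \<union> sets G')
            in distr M' B Xt = distr M B X \<and>
               indep_of_sigma M' B Xt H' \<and>
               same_cond_law M' H' D (\<lambda>\<omega>. \<phi> (X (\<pi> \<omega>), Y (\<pi> \<omega>)))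
                                     (\<lambda>\<omega>. \<phi> (Xt \<omega>, Y (\<pi> \<omega>))))"
proof -
  interpret L4 M F G B C D X Xbar Y \<phi>
    using assms unfolding L4_def by blast
  show ?thesis by (rule final)
qed

end
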